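(* Let $G$ be a graph, $e=uv$ an edge, and $w$ a vertex such that $w$ is an isolated vertex of $G-N_G[\{u,v\}]$ (in particular $w\notin N_G[\{u,v\}]$). If $w$ has a neighbour $x$ with $\deg_G(x)=2$, then $\operatorname{reg}(G)=\operatorname{reg}(G-e)$, where $G-e$ is obtained by deleting the edge $e$.
   Context: $N_G[\{u,v\}]=N_G(u)\cup N_G(v)\cup\{u,v\}$. $\operatorname{reg}(G)=\max\{j\ge0:\widetilde H_{j-1}(\operatorname{Ind}(G[S]);\Bbbk)\neq0\text{ for some }S\subseteq V(G)\}$ over a field $\Bbbk$, $\operatorname{Ind}$ the independence complex. *)

theory Defs
  imports Main
begin

definition simple_graph :: "'a set \<Rightarrow> 'a set set \<Rightarrow> bool" where
  "simple_graph V E \<longleftrightarrow> finite V \<and>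
     (\<forall>e\<in>E. \<exists>a b. a \<noteq> b \<and> a \<in> V \<and> b \<in> V \<and> e = {a, b})"

definition nbhd :: "'a set \<Rightarrow> 'a set set \<Rightarrow> 'a \<Rightarrow> 'a set" where
  "nbhd V E x = {y \<in> V. {x, y} \<in> E}"

definition degree :: "'a set \<Rightarrow> 'a set set \<Rightarrow> 'a \<Rightarrow> nat" where
  "degree V E x = card (nbhd V E x)"

definition closed_nbhd_edge :: "'a set \<Rightarrow> 'a set set \<Rightarrow> 'a \<Rightarrow> 'a \<Rightarrow> 'a set" where
  "closed_nbhd_edge V E u v = nbhd V E u \<union> nbhd V E v \<union> {u, v}"

definition induced_edges :: "'a set set \<Rightarrow> 'a set \<Rightarrow> 'a set set" where
  "induced_edges E S = {e \<in> E. e \<subseteq> S}"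

definition ind_complex :: "'a set \<Rightarrow> 'a set set \<Rightarrow> 'a set set" where
  "ind_complex V E = {\<sigma>. \<sigma> \<subseteq> V \<and> (\<forall>e\<in>E. \<not> e \<subseteq> \<sigma>)}"

text \<open>Augmented simplicial chain complex over a field 'k, with vertex set V and
  faces K.  Oriented simplices are ordered by the linear order on vertices.\<close>
definition chains :: "'a set set \<Rightarrow> int \<Rightarrow> ('a set \<Rightarrow> 'k::field) set" where
  "chains K d = {c. \<forall>\<sigma>. c \<sigma> \<noteq> 0 \<longrightarrow> \<sigma> \<in> K \<and> int (card \<sigma>) = d + 1}"

definition orient_sign :: "'a::linorder \<Rightarrow> 'a set \<Rightarrow> 'k::field" where
  "orient_sign v \<sigma> = (-1) ^ card {w \<in> \<sigma>. w < v}"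

text \<open>Boundary: the coefficient of \<tau> in \<partial>c is \<Sum>_{v\<notin>\<tau>} sign(v, \<tau>\<union>{v}) c(\<tau>\<union>{v}),
  i.e. \<partial>[v_0<...<v_d] = \<Sum>_i (-1)^i [v_0,...,v_i hat,...,v_d].\<close>
definition boundary :: "'a::linorder set \<Rightarrow> ('a set \<Rightarrow> 'k::field) \<Rightarrow> 'a set \<Rightarrow> 'k" where
  "boundary V c \<tau> = (\<Sum>v\<in>V - \<tau>. orient_sign v (insert v \<tau>) * c (insert v \<tau>))"

definition reduced_homology_nonzero ::
    "'k::field itself \<Rightarrow> 'a::linorder set \<Rightarrow> 'a set set \<Rightarrow> int \<Rightarrow> bool" where
  "reduced_homology_nonzero _ V K d \<longleftrightarrow>
     (\<exists>z::'a set \<Rightarrow> 'k. z \<in> chains K d \<and> boundary V z = (\<lambda>_. 0) \<and>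
        \<not> (\<exists>b \<in> chains K (d + 1). boundary V b = z))"

text \<open>Castelnuovo--Mumford regularity via Hochster's formula, as in the paper:
  reg(G) = max { j \<ge> 0 : \<tilde>H_{j-1}(Ind(G[S]); k) \<noteq> 0 for some S \<subseteq> V(G) }.\<close>
definition reg :: "'k::field itself \<Rightarrow> 'a::linorder set \<Rightarrow> 'a set set \<Rightarrow> nat" where
  "reg k V E = Max {j::nat. \<exists>S \<subseteq> V.
       reduced_homology_nonzero k S (ind_complex S (induced_edges E S)) (int j - 1)}"

end

theory Submission
  imports Defs
begin


lemma os_self: "orient_sign b (insert b \<tau>) = orient_sign b \<tau>"
  unfolding orient_sign_def by (rule arg_cong[where f="\<lambda>n. (-1)^n"]) (rule arg_cong[where f=card], auto)

lemma os_ins: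
  assumes "finite \<tau>" "a \<notin> \<tau>" "a \<noteq> b"
  shows "(orient_sign b (insert a \<tau>) :: 'k::field) = (if a < b then -1 else 1) * orient_sign b \<tau>"
proof (cases "a < b")
  case True
  have "{w \<in> insert a \<tau>. w < b} = insert a {w \<in> \<tau>. w < b}" using True by auto
  moreover have "card (insert a {w \<in> \<tau>. w < b}) = Suc (card {w \<in> \<tau>. w < b})"
    using assms by auto
  ultimately show ?thesis using True unfolding orient_sign_def by simp
next
  case False
  have "{w \<in> insert a \<tau>. w < b} = {w \<in> \<tau>. w < b}" using False by auto
  then show ?thesis using False unfolding orient_sign_def by simp
qed

lemma os_sq: "(orient_sign a \<sigma> :: 'k::field) * orient_sign a \<sigma> = 1"
  unfolding orient_sign_def by (simp add: power_mult_distrib[symmetric])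

lemma eps_swap:
  assumes "(a::'a::linorder) \<noteq> b"
  shows "((if a < b then -1 else 1) :: 'k::field) * (if b < a then -1 else 1) = -1"
  using assms by (auto simp: not_less_iff_gr_or_eq)



definition supp_in :: "'a set \<Rightarrow> ('a set \<Rightarrow> 'k::field) \<Rightarrow> bool" where
  "supp_in U c \<longleftrightarrow> (\<forall>\<sigma>. c \<sigma> \<noteq> 0 \<longrightarrow> \<sigma> \<subseteq> U)"

lemma bd_alt: "boundary U c \<tau> = (\<Sum>v\<in>U - \<tau>. orient_sign v \<tau> * c (insert v \<tau>))"
  unfolding boundary_def by (simp add: os_self)

lemma supp_zero: "supp_in U c \<Longrightarrow> \<not> \<sigma> \<subseteq> U \<Longrightarrow> c \<sigma> = 0"
  unfolding supp_in_def by blast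

lemma bd_supp: "supp_in U c \<Longrightarrow> supp_in U (boundary U c)"
  unfolding supp_in_def boundary_def
proof (intro allI impI)
  fix \<sigma> assume h: "\<forall>\<sigma>. c \<sigma> \<noteq> 0 \<longrightarrow> \<sigma> \<subseteq> U"
    and "(\<Sum>v\<in>U - \<sigma>. orient_sign v (insert v \<sigma>) * c (insert v \<sigma>)) \<noteq> 0"
  then obtain v where "c (insert v \<sigma>) \<noteq> 0" by (metis (no_types, lifting) mult_zero_right sum.neutral)
  then show "\<sigma> \<subseteq> U" using h by blast
qed

lemma bd_out: "supp_in U c \<Longrightarrow> \<not> \<tau> \<subseteq> U \<Longrightarrow> boundary U c \<tau> = 0"
  using bd_supp supp_zero by blast

lemma dd_zero:
  fixes c :: "'a::linorder set \<Rightarrow> 'k::field"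
  assumes U: "finite U" and sc: "supp_in U c"
  shows "boundary U (boundary U c) \<tau> = 0"
proof (cases "\<tau> \<subseteq> U")
  case False
  then show ?thesis using bd_out[OF bd_supp[OF sc]] by blast
next
  case True
  hence ft: "finite \<tau>" using U finite_subset by blast
  define f where "f = (\<lambda>(a,b). orient_sign a \<tau> * (orient_sign b (insert a \<tau>) * c (insert b (insert a \<tau>))))"
  have "boundary U (boundary U c) \<tau> = (\<Sum>a\<in>U - \<tau>. \<Sum>b\<in>U - \<tau> - {a}. f (a,b))"
    unfolding bd_alt f_def sum_distrib_left
    by (intro sum.cong refl) (auto simp: Diff_insert[symmetric] insert_commute)
  also have "\<dots> = sum f (Sigma (U - \<tau>) (\<lambda>a. U - \<tau> - {a}))"
    using sum.Sigma[of "U-\<tau>" "\<lambda>a. U - \<tau> - {a}" "\<lambda>a b. f (a,b)"] U by simp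
  also have "Sigma (U - \<tau>) (\<lambda>a. U - \<tau> - {a}) = {p \<in> (U-\<tau>)\<times>(U-\<tau>). fst p < snd p} \<union> {p \<in> (U-\<tau>)\<times>(U-\<tau>). snd p < fst p}"
    by (auto simp: neq_iff)
  also have "sum f \<dots> = sum f {p \<in> (U-\<tau>)\<times>(U-\<tau>). fst p < snd p} + sum f {p \<in> (U-\<tau>)\<times>(U-\<tau>). snd p < fst p}"
    by (rule sum.union_disjoint) (use U in auto)
  also have "{p \<in> (U-\<tau>)\<times>(U-\<tau>). snd p < fst p} = prod.swap ` {p \<in> (U-\<tau>)\<times>(U-\<tau>). fst p < snd p}"
    by force
  also have "sum f \<dots> = sum (f \<circ> prod.swap) {p \<in> (U-\<tau>)\<times>(U-\<tau>). fst p < snd p}"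
    by (rule sum.reindex) (auto intro: inj_onI)
  also have "sum f {p \<in> (U-\<tau>)\<times>(U-\<tau>). fst p < snd p} + \<dots> = sum (\<lambda>p. f p + f (prod.swap p)) {p \<in> (U-\<tau>)\<times>(U-\<tau>). fst p < snd p}"
    by (simp add: sum.distrib)
  also have "\<dots> = 0"
  proof (rule sum.neutral, rule ballI)
    fix p assume "p \<in> {p \<in> (U-\<tau>)\<times>(U-\<tau>). fst p < snd p}"
    then obtain a b where p: "p = (a,b)" and ab: "a \<in> U" "a \<notin> \<tau>" "b \<in> U" "b \<notin> \<tau>" "a < b" by auto
    have 1: "(orient_sign b (insert a \<tau>) :: 'k) = (if a < b then -1 else 1) * orient_sign b \<tau>"
      using os_ins[OF ft ab(2), of b] ab less_imp_neq[OF ab(5)] by simp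
    have 2: "(orient_sign a (insert b \<tau>) :: 'k) = (if b < a then -1 else 1) * orient_sign a \<tau>"
      using os_ins[OF ft ab(4), of a] ab less_imp_neq[OF ab(5)] by simp
    show "f p + f (prod.swap p) = 0" unfolding p
      using ab less_not_sym[OF ab(5)] unfolding f_def by (simp add: 1 2 insert_commute algebra_simps)
  qed
  finally show ?thesis .
qed



definition cone :: "'a::linorder \<Rightarrow> ('a set \<Rightarrow> 'k::field) \<Rightarrow> 'a set \<Rightarrow> 'k" where
  "cone a c \<rho> = (if a \<in> \<rho> then orient_sign a \<rho> * c (\<rho> - {a}) else 0)"

definition contr :: "'a::linorder \<Rightarrow> ('a set \<Rightarrow> 'k::field) \<Rightarrow> 'a set \<Rightarrow> 'k" where
  "contr a c \<sigma> = (if a \<notin> \<sigma> then orient_sign a \<sigma> * c (insert a \<sigma>) else 0)"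

lemma bd_add: "boundary U (\<lambda>\<sigma>. c1 \<sigma> + c2 \<sigma>) = (\<lambda>\<tau>. boundary U c1 \<tau> + boundary U c2 \<tau>)"
  unfolding boundary_def by (simp add: distrib_left sum.distrib)

lemma bd_diff: "boundary U (\<lambda>\<sigma>. c1 \<sigma> - c2 \<sigma>) = (\<lambda>\<tau>. boundary U c1 \<tau> - boundary U c2 \<tau>)"
  unfolding boundary_def by (simp add: right_diff_distrib sum_subtractf)

lemma bd_zero: "boundary U (\<lambda>_. 0) = (\<lambda>_. 0)"
  unfolding boundary_def by simp

lemma cone_supp: "a \<in> U \<Longrightarrow> supp_in U c \<Longrightarrow> supp_in U (cone a c)"
  unfolding supp_in_def cone_def by (auto split: if_splits)

lemma cone_id:
  fixes c :: "'a::linorder set \<Rightarrow> 'k::field"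
  assumes U: "finite U" and aU: "a \<in> U" and sc: "supp_in U c"
  shows "boundary U (cone a c) \<tau> = c \<tau> - cone a (boundary U c) \<tau>"
proof (cases "\<tau> \<subseteq> U")
  case False
  have "boundary U (cone a c) \<tau> = 0" using bd_out[OF cone_supp[OF aU sc] False] .
  moreover have "c \<tau> = 0" using supp_zero[OF sc False] .
  moreover have "cone a (boundary U c) \<tau> = 0"
  proof -
    have "\<not> \<tau> - {a} \<subseteq> U" using False aU by blast
    then show ?thesis unfolding cone_def using bd_out[OF sc] by simp
  qed
  ultimately show ?thesis by simp
next
  case True
  hence ft: "finite \<tau>" using U finite_subset by blast
  show ?thesis
  proof (cases "a \<in> \<tau>")
    case False
    have "boundary U (cone a c) \<tau> = (\<Sum>b\<in>U - \<tau>. if b = a then c \<tau> else 0)"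
      unfolding bd_alt
    proof (rule sum.cong[OF refl])
      fix b assume b: "b \<in> U - \<tau>"
      show "orient_sign b \<tau> * cone a c (insert b \<tau>) = (if b = a then c \<tau> else 0)"
        using False b unfolding cone_def by (auto simp: os_self os_sq[unfolded mult.assoc])
    qed
    also have "\<dots> = c \<tau>" using aU False U by simp
    finally show ?thesis using False unfolding cone_def by simp
  next
    case True
    define \<rho> where "\<rho> = \<tau> - {a}"
    have t: "\<tau> = insert a \<rho>" "a \<notin> \<rho>" using True \<rho>_def by auto
    have fr: "finite \<rho>" using ft \<rho>_def by simp
    have "cone a (boundary U c) \<tau> = orient_sign a \<tau> * (\<Sum>b\<in>insert a (U - \<tau>). orient_sign b \<rho> * c (insert b \<rho>))"
    proof -
      have "U - \<rho> = insert a (U - \<tau>)" using t aU by auto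
      then show ?thesis unfolding cone_def bd_alt using True \<rho>_def by simp
    qed
    also have "\<dots> = orient_sign a \<tau> * (orient_sign a \<rho> * c \<tau> + (\<Sum>b\<in>U - \<tau>. orient_sign b \<rho> * c (insert b \<rho>)))"
      using U t by (simp add: sum.insert)
    also have "\<dots> = c \<tau> + orient_sign a \<tau> * (\<Sum>b\<in>U - \<tau>. orient_sign b \<rho> * c (insert b \<rho>))"
    proof -
      have "orient_sign a \<tau> = (orient_sign a \<rho> :: 'k)" using t os_self by metis
      then show ?thesis by (simp add: distrib_left mult.assoc[symmetric] os_sq)
    qed
    finally have R: "cone a (boundary U c) \<tau> = c \<tau> + orient_sign a \<tau> * (\<Sum>b\<in>U - \<tau>. orient_sign b \<rho> * c (insert b \<rho>))" .
    have L: "boundary U (cone a c) \<tau> = - (orient_sign a \<tau> * (\<Sum>b\<in>U - \<tau>. orient_sign b \<rho> * c (insert b \<rho>)))"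
      unfolding bd_alt sum_distrib_left sum_negf[symmetric]
    proof (rule sum.cong[OF refl])
      fix b assume b: "b \<in> U - \<tau>"
      hence ba: "b \<noteq> a" "b \<notin> \<rho>" "b \<notin> \<tau>" using t by auto
      have e1: "insert b \<tau> - {a} = insert b \<rho>" using t ba by auto
      have s1: "(orient_sign a (insert b \<tau>) :: 'k) = (if b < a then -1 else 1) * orient_sign a \<tau>"
        using os_ins[OF ft ba(3), of a] ba by simp
      have s2: "(orient_sign b \<tau> :: 'k) = (if a < b then -1 else 1) * orient_sign b \<rho>"
        using os_ins[OF fr t(2), of b] ba t by simp
      have "orient_sign b \<tau> * cone a c (insert b \<tau>) = orient_sign b \<tau> * (orient_sign a (insert b \<tau>) * c (insert b \<rho>))"
        unfolding cone_def using t e1 by simp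
      also have "\<dots> = ((if a < b then -1 else 1) * (if b < a then -1 else 1)) * (orient_sign a \<tau> * (orient_sign b \<rho> * c (insert b \<rho>)))"
        unfolding s1 s2 by (simp add: algebra_simps)
      also have "\<dots> = - (orient_sign a \<tau> * (orient_sign b \<rho> * c (insert b \<rho>)))"
        by (subst eps_swap[of a b]) (use ba in auto)
      finally show "orient_sign b \<tau> * cone a c (insert b \<tau>) = - (orient_sign a \<tau> * (orient_sign b \<rho> * c (insert b \<rho>)))" .
    qed
    show ?thesis using L R by simp
  qed
qed



lemma contr_supp: "supp_in U c \<Longrightarrow> supp_in U (contr a c)"
  unfolding supp_in_def contr_def by (auto split: if_splits)

lemma contr_bd:
  fixes c :: "'a::linorder set \<Rightarrow> 'k::field"
  assumes U: "finite U" and sc: "supp_in U c"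
  shows "contr a (boundary U c) \<sigma> = - boundary U (contr a c) \<sigma>"
proof (cases "a \<in> \<sigma>")
  case True
  then show ?thesis unfolding contr_def bd_alt by simp
next
  case aS: False
  show ?thesis
  proof (cases "\<sigma> \<subseteq> U")
    case False
    have "\<not> insert a \<sigma> \<subseteq> U" using False by blast
    then have "contr a (boundary U c) \<sigma> = 0" unfolding contr_def using bd_out[OF sc] by simp
    moreover have "boundary U (contr a c) \<sigma> = 0" using bd_out[OF contr_supp[OF sc] False] .
    ultimately show ?thesis by simp
  next
    case True
    hence ft: "finite \<sigma>" using U finite_subset by blast
    have R: "boundary U (contr a c) \<sigma> = (\<Sum>b\<in>U - insert a \<sigma>. orient_sign b \<sigma> * contr a c (insert b \<sigma>))"
      unfolding bd_alt
      by (rule sum.mono_neutral_cong_right) (use U in \<open>auto simp: contr_def\<close>)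
    have L: "contr a (boundary U c) \<sigma> = (\<Sum>b\<in>U - insert a \<sigma>. orient_sign a \<sigma> * (orient_sign b (insert a \<sigma>) * c (insert b (insert a \<sigma>))))"
      unfolding contr_def bd_alt using aS by (simp add: sum_distrib_left)
    show ?thesis unfolding L R sum_negf[symmetric]
    proof (rule sum.cong[OF refl])
      fix b assume b: "b \<in> U - insert a \<sigma>"
      hence ba: "b \<noteq> a" "b \<notin> \<sigma>" by auto
      have s1: "(orient_sign a (insert b \<sigma>) :: 'k) = (if b < a then -1 else 1) * orient_sign a \<sigma>"
        using os_ins[OF ft ba(2), of a] ba by simp
      have s2: "(orient_sign b (insert a \<sigma>) :: 'k) = (if a < b then -1 else 1) * orient_sign b \<sigma>"
        using os_ins[OF ft aS, of b] ba by simp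
      have "orient_sign b \<sigma> * contr a c (insert b \<sigma>) = orient_sign b \<sigma> * (orient_sign a (insert b \<sigma>) * c (insert b (insert a \<sigma>)))"
        unfolding contr_def using aS ba by (simp add: insert_commute)
      also have "\<dots> = - (orient_sign a \<sigma> * (orient_sign b (insert a \<sigma>) * c (insert b (insert a \<sigma>))))"
        unfolding s1 s2 using ba by (cases a b rule: linorder_cases) auto
      finally show "orient_sign a \<sigma> * (orient_sign b (insert a \<sigma>) * c (insert b (insert a \<sigma>))) = - (orient_sign b \<sigma> * contr a c (insert b \<sigma>))"
        by simp
    qed
  qed
qed

lemma contr_cone:
  assumes "\<forall>\<sigma>. a \<in> \<sigma> \<longrightarrow> y \<sigma> = 0"
  shows "contr a (cone a y) = y"
proof
  fix \<sigma> show "contr a (cone a y) \<sigma> = y \<sigma>"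
    using assms unfolding contr_def cone_def
    by (auto simp: os_self mult.assoc[symmetric] os_sq)
qed

lemma contr_zero:
  fixes c :: "'a::linorder set \<Rightarrow> 'k::field"
  assumes "contr a c = (\<lambda>_. 0)" "a \<in> \<rho>"
  shows "c \<rho> = 0"
proof -
  have "contr a c (\<rho> - {a}) = 0" using assms by simp
  then have "orient_sign a (\<rho> - {a}) * c \<rho> = 0" unfolding contr_def using assms(2) by (simp add: insert_absorb)
  moreover have "(orient_sign a (\<rho> - {a}) :: 'k) \<noteq> 0" unfolding orient_sign_def by simp
  ultimately show ?thesis by simp
qed



definition dclosed :: "'a set set \<Rightarrow> bool" where
  "dclosed K \<longleftrightarrow> (\<forall>\<sigma>\<in>K. \<forall>b\<in>\<sigma>. \<sigma> - {b} \<in> K)"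

lemma ch_supp: "K \<subseteq> Pow U \<Longrightarrow> c \<in> chains K d \<Longrightarrow> supp_in U c"
  unfolding chains_def supp_in_def by blast

lemma ch_zero: "(\<lambda>_. 0) \<in> chains K d"
  unfolding chains_def by simp

lemma ch_mono: "K \<subseteq> K' \<Longrightarrow> c \<in> chains K d \<Longrightarrow> c \<in> chains K' d"
  unfolding chains_def by blast

lemma ch_add:
  assumes a1: "c1 \<in> chains K d" and a2: "c2 \<in> chains K d"
  shows "(\<lambda>\<sigma>. c1 \<sigma> + c2 \<sigma>) \<in> chains K d"
  unfolding chains_def mem_Collect_eq
proof (intro allI impI)
  fix \<sigma> assume "c1 \<sigma> + c2 \<sigma> \<noteq> 0"
  hence "c1 \<sigma> \<noteq> 0 \<or> c2 \<sigma> \<noteq> 0" by auto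
  then show "\<sigma> \<in> K \<and> int (card \<sigma>) = d + 1" using a1 a2 unfolding chains_def by blast
qed

lemma ch_diff:
  assumes a1: "c1 \<in> chains K d" and a2: "c2 \<in> chains K d"
  shows "(\<lambda>\<sigma>. c1 \<sigma> - c2 \<sigma>) \<in> chains K d"
  unfolding chains_def mem_Collect_eq
proof (intro allI impI)
  fix \<sigma> assume "c1 \<sigma> - c2 \<sigma> \<noteq> 0"
  hence "c1 \<sigma> \<noteq> 0 \<or> c2 \<sigma> \<noteq> 0" by auto
  then show "\<sigma> \<in> K \<and> int (card \<sigma>) = d + 1" using a1 a2 unfolding chains_def by blast
qed

lemma ch_uminus: "c1 \<in> chains K d \<Longrightarrow> (\<lambda>\<sigma>. - c1 \<sigma>) \<in> chains K d"
  unfolding chains_def by simp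

lemma ch_bd:
  assumes U: "finite U" and KU: "K \<subseteq> Pow U" and dc: "dclosed K" and c: "c \<in> chains K (d+1)"
  shows "boundary U c \<in> chains K d"
  unfolding chains_def mem_Collect_eq
proof (intro allI impI)
  fix \<tau> assume nz: "boundary U c \<tau> \<noteq> 0"
  have "\<exists>b\<in>U - \<tau>. c (insert b \<tau>) \<noteq> 0"
  proof (rule ccontr)
    assume "\<not> (\<exists>b\<in>U - \<tau>. c (insert b \<tau>) \<noteq> 0)"
    then have "boundary U c \<tau> = 0" unfolding boundary_def by (intro sum.neutral) auto
    then show False using nz by simp
  qed
  then obtain b where b: "b \<in> U - \<tau>" "c (insert b \<tau>) \<noteq> 0" by blast
  have "\<forall>\<sigma>. c \<sigma> \<noteq> 0 \<longrightarrow> \<sigma> \<in> K \<and> int (card \<sigma>) = d + 1 + 1" using c unfolding chains_def by simp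
  hence K: "insert b \<tau> \<in> K" "int (card (insert b \<tau>)) = d + 1 + 1" using b(2) by blast+
  have "\<tau> \<subseteq> U" using K KU by blast
  hence "finite \<tau>" using U by (rule finite_subset)
  hence "card (insert b \<tau>) = card \<tau> + 1" using b by simp
  moreover have "insert b \<tau> - {b} \<in> K" using dc K(1) unfolding dclosed_def by (meson insertI1)
  moreover have "insert b \<tau> - {b} = \<tau>" using b by auto
  ultimately show "\<tau> \<in> K \<and> int (card \<tau>) = d + 1" using K(2) by simp
qed

lemma ch_cone:
  assumes U: "finite U" and BU: "B \<subseteq> Pow U" and BK: "\<forall>\<sigma>\<in>B. a \<notin> \<sigma> \<and> insert a \<sigma> \<in> K"
    and c: "c \<in> chains B d"
  shows "cone a c \<in> chains K (d+1)"
  unfolding chains_def mem_Collect_eq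
proof (intro allI impI)
  fix \<rho> assume "cone a c \<rho> \<noteq> 0"
  hence r: "a \<in> \<rho>" "c (\<rho> - {a}) \<noteq> 0" unfolding cone_def by (auto split: if_splits)
  hence B: "\<rho> - {a} \<in> B" "int (card (\<rho> - {a})) = d + 1" using c unfolding chains_def by auto
  have "\<rho> - {a} \<subseteq> U" using B BU by blast
  hence f: "finite (\<rho> - {a})" using U by (rule finite_subset)
  have e: "insert a (\<rho> - {a}) = \<rho>" using r by auto
  have "card \<rho> = card (\<rho> - {a}) + 1" using f e by (metis Diff_iff card_insert_disjoint insertI1 Suc_eq_plus1)
  moreover have "\<rho> \<in> K" using BK B e by metis
  ultimately show "\<rho> \<in> K \<and> int (card \<rho>) = d + 1 + 1" using B by simp
qed

lemma ch_contr:
  assumes U: "finite U" and KU: "K \<subseteq> Pow U" and c: "c \<in> chains K d"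
  shows "contr a c \<in> chains {\<sigma>. a \<notin> \<sigma> \<and> insert a \<sigma> \<in> K} (d-1)"
  unfolding chains_def mem_Collect_eq
proof (intro allI impI)
  fix \<sigma> assume "contr a c \<sigma> \<noteq> 0"
  hence r: "a \<notin> \<sigma>" "c (insert a \<sigma>) \<noteq> 0" unfolding contr_def by (auto split: if_splits)
  hence K: "insert a \<sigma> \<in> K" "int (card (insert a \<sigma>)) = d + 1" using c unfolding chains_def by auto
  have "\<sigma> \<subseteq> U" using K KU by blast
  hence "finite \<sigma>" using U by (rule finite_subset)
  then show "(a \<notin> \<sigma> \<and> insert a \<sigma> \<in> K) \<and> int (card \<sigma>) = d - 1 + 1"
    using K r by simp
qed

lemma contr_add: "contr a (\<lambda>\<sigma>. f \<sigma> + g \<sigma>) = (\<lambda>\<sigma>. contr a f \<sigma> + contr a g \<sigma>)"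
  unfolding contr_def by (auto simp: distrib_left)

lemma contr_diff: "contr a (\<lambda>\<sigma>. f \<sigma> - g \<sigma>) = (\<lambda>\<sigma>. contr a f \<sigma> - contr a g \<sigma>)"
  unfolding contr_def by (auto simp: right_diff_distrib)

lemma dd0: "finite U \<Longrightarrow> supp_in U c \<Longrightarrow> boundary U (boundary U c) = (\<lambda>_. 0)"
  using dd_zero by blast

lemma contr_noa: "(\<forall>\<sigma>. c \<sigma> \<noteq> 0 \<longrightarrow> a \<notin> \<sigma>) \<Longrightarrow> contr a c = (\<lambda>_. 0)"
  unfolding contr_def by fastforce



lemma lem_i:
  fixes k :: "'k::field itself" and K :: "'a::linorder set set"
  assumes U: "finite U" and KU: "K \<subseteq> Pow U" and dc: "dclosed K" and aU: "a \<in> U"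
    and H: "reduced_homology_nonzero k U K d"
  shows "reduced_homology_nonzero k U {\<sigma>\<in>K. a \<notin> \<sigma>} d \<or>
         reduced_homology_nonzero k U {\<sigma>. a \<notin> \<sigma> \<and> insert a \<sigma> \<in> K} (d - 1)"
proof -
  define B where "B = {\<sigma>. a \<notin> \<sigma> \<and> insert a \<sigma> \<in> K}"
  have BU: "B \<subseteq> Pow U" using KU unfolding B_def by blast
  have BK: "\<forall>\<sigma>\<in>B. a \<notin> \<sigma> \<and> insert a \<sigma> \<in> K" unfolding B_def by blast
  obtain z :: "'a set \<Rightarrow> 'k" where z: "z \<in> chains K d" "boundary U z = (\<lambda>_. 0)"
    and nb: "\<not> (\<exists>b \<in> chains K (d + 1). boundary U b = z)"
    using H unfolding reduced_homology_nonzero_def by blast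
  have sz: "supp_in U z" using ch_supp[OF KU z(1)] .
  define y where "y = contr a z"
  have y: "y \<in> chains B (d - 1)" unfolding y_def B_def using ch_contr[OF U KU z(1)] .
  have by0: "boundary U y = (\<lambda>_. 0)"
  proof
    fix \<tau> have "boundary U y \<tau> = - contr a (boundary U z) \<tau>" unfolding y_def using contr_bd[OF U sz] by simp
    then show "boundary U y \<tau> = 0" using z(2) unfolding contr_def by simp
  qed
  show ?thesis
  proof (cases "\<exists>b \<in> chains B (d - 1 + 1). boundary U b = y")
    case False
    then have "reduced_homology_nonzero k U B (d - 1)"
      unfolding reduced_homology_nonzero_def using y by0 by blast
    then show ?thesis unfolding B_def by blast
  next
    case True
    then obtain y' where y': "y' \<in> chains B d" "boundary U y' = y" by auto
    have sy': "supp_in U y'" using ch_supp[OF BU y'(1)] .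
    have cy: "cone a y' \<in> chains K (d+1)" using ch_cone[OF U BU BK y'(1)] .
    have scy: "supp_in U (cone a y')" using cone_supp[OF aU sy'] .
    define z' where "z' = (\<lambda>\<sigma>. z \<sigma> + boundary U (cone a y') \<sigma>)"
    have z'K: "z' \<in> chains K d" unfolding z'_def
      by (rule ch_add[OF z(1) ch_bd[OF U KU dc cy]])
    have y'noa: "\<forall>\<sigma>. a \<in> \<sigma> \<longrightarrow> y' \<sigma> = 0" using y'(1) BK unfolding chains_def by blast
    have cz': "contr a z' = (\<lambda>_. 0)"
    proof
      fix \<sigma>
      have "contr a z' \<sigma> = contr a z \<sigma> + contr a (boundary U (cone a y')) \<sigma>"
        unfolding z'_def contr_add by simp
      also have "\<dots> = y \<sigma> - boundary U (contr a (cone a y')) \<sigma>"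
        using contr_bd[OF U scy] unfolding y_def by simp
      also have "\<dots> = 0" using contr_cone[OF y'noa] y'(2) by simp
      finally show "contr a z' \<sigma> = 0" .
    qed
    have z'A: "z' \<in> chains {\<sigma>\<in>K. a \<notin> \<sigma>} d"
      using z'K contr_zero[OF cz'] unfolding chains_def by blast
    have bz': "boundary U z' = (\<lambda>_. 0)"
      unfolding z'_def bd_add z(2) dd0[OF U scy] by simp
    have "\<not> (\<exists>b \<in> chains {\<sigma>\<in>K. a \<notin> \<sigma>} (d + 1). boundary U b = z')"
    proof
      assume "\<exists>b \<in> chains {\<sigma>\<in>K. a \<notin> \<sigma>} (d + 1). boundary U b = z'"
      then obtain b where b: "b \<in> chains {\<sigma>\<in>K. a \<notin> \<sigma>} (d + 1)" "boundary U b = z'" by blast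
      have bK: "b \<in> chains K (d+1)" using ch_mono[OF _ b(1)] by blast
      have "boundary U (\<lambda>\<sigma>. b \<sigma> - cone a y' \<sigma>) = z"
        unfolding bd_diff b(2) z'_def by simp
      moreover have "(\<lambda>\<sigma>. b \<sigma> - cone a y' \<sigma>) \<in> chains K (d+1)" by (rule ch_diff[OF bK cy])
      ultimately show False using nb by blast
    qed
    then have "reduced_homology_nonzero k U {\<sigma>\<in>K. a \<notin> \<sigma>} d"
      unfolding reduced_homology_nonzero_def using z'A bz' by blast
    then show ?thesis by blast
  qed
qed



lemma lem_ii:
  fixes k :: "'k::field itself" and K :: "'a::linorder set set"
  assumes U: "finite U" and KU: "K \<subseteq> Pow U" and dc: "dclosed K" and aU: "a \<in> U"
    and H: "reduced_homology_nonzero k U {\<sigma>\<in>K. a \<notin> \<sigma>} d"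
  shows "reduced_homology_nonzero k U K d \<or>
         reduced_homology_nonzero k U {\<sigma>. a \<notin> \<sigma> \<and> insert a \<sigma> \<in> K} d"
proof -
  define B where "B = {\<sigma>. a \<notin> \<sigma> \<and> insert a \<sigma> \<in> K}"
  define A where "A = {\<sigma>\<in>K. a \<notin> \<sigma>}"
  have BU: "B \<subseteq> Pow U" using KU unfolding B_def by blast
  have BK: "\<forall>\<sigma>\<in>B. a \<notin> \<sigma> \<and> insert a \<sigma> \<in> K" unfolding B_def by blast
  obtain z :: "'a set \<Rightarrow> 'k" where z: "z \<in> chains A d" "boundary U z = (\<lambda>_. 0)"
    and nb: "\<not> (\<exists>b \<in> chains A (d + 1). boundary U b = z)"
    using H unfolding reduced_homology_nonzero_def A_def by blast
  have zK: "z \<in> chains K d" using ch_mono[OF _ z(1)] unfolding A_def by blast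
  show ?thesis
  proof (cases "\<exists>b \<in> chains K (d + 1). boundary U b = z")
    case False
    then show ?thesis unfolding reduced_homology_nonzero_def using zK z(2) by blast
  next
    case True
    then obtain b where b: "b \<in> chains K (d+1)" "boundary U b = z" by blast
    have sb: "supp_in U b" using ch_supp[OF KU b(1)] .
    define y where "y = contr a b"
    have y: "y \<in> chains B d" unfolding y_def B_def using ch_contr[OF U KU b(1)] by simp
    have cz: "contr a z = (\<lambda>_. 0)"
      by (rule contr_noa) (use z(1) in \<open>auto simp: chains_def A_def\<close>)
    have by0: "boundary U y = (\<lambda>_. 0)"
    proof
      fix \<tau> have "boundary U y \<tau> = - contr a (boundary U b) \<tau>" unfolding y_def using contr_bd[OF U sb] by simp
      then show "boundary U y \<tau> = 0" using cz b(2) by simp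
    qed
    show ?thesis
    proof (cases "\<exists>c \<in> chains B (d + 1). boundary U c = y")
      case False
      then have "reduced_homology_nonzero k U B d"
        unfolding reduced_homology_nonzero_def using y by0 by blast
      then show ?thesis unfolding B_def by blast
    next
      case True
      then obtain c where c: "c \<in> chains B (d+1)" "boundary U c = y" by blast
      have sc: "supp_in U c" using ch_supp[OF BU c(1)] .
      have cc: "cone a c \<in> chains K (d+1+1)" using ch_cone[OF U BU BK c(1)] .
      have scc: "supp_in U (cone a c)" using cone_supp[OF aU sc] .
      define b' where "b' = (\<lambda>\<sigma>. b \<sigma> + boundary U (cone a c) \<sigma>)"
      have b'K: "b' \<in> chains K (d+1)" unfolding b'_def
        by (rule ch_add[OF b(1) ch_bd[OF U KU dc cc]])
      have cnoa: "\<forall>\<sigma>. a \<in> \<sigma> \<longrightarrow> c \<sigma> = 0" using c(1) BK unfolding chains_def by blast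
      have cb': "contr a b' = (\<lambda>_. 0)"
      proof
        fix \<sigma>
        have "contr a b' \<sigma> = contr a b \<sigma> + contr a (boundary U (cone a c)) \<sigma>"
          unfolding b'_def contr_add by simp
        also have "\<dots> = y \<sigma> - boundary U (contr a (cone a c)) \<sigma>"
          using contr_bd[OF U scc] unfolding y_def by simp
        also have "\<dots> = 0" using contr_cone[OF cnoa] c(2) by simp
        finally show "contr a b' \<sigma> = 0" .
      qed
      have b'A: "b' \<in> chains A (d+1)"
        using b'K contr_zero[OF cb'] unfolding chains_def A_def by blast
      have "boundary U b' = z"
        unfolding b'_def bd_add b(2) dd0[OF U scc] by simp
      then show ?thesis using nb b'A by blast
    qed
  qed
qed

lemma lem_iii:
  fixes k :: "'k::field itself" and K :: "'a::linorder set set"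
  assumes U: "finite U" and KU: "K \<subseteq> Pow U" and dc: "dclosed K" and aU: "a \<in> U"
    and H: "reduced_homology_nonzero k U {\<sigma>. a \<notin> \<sigma> \<and> insert a \<sigma> \<in> K} d"
  shows "reduced_homology_nonzero k U K (d+1) \<or>
         reduced_homology_nonzero k U {\<sigma>\<in>K. a \<notin> \<sigma>} d"
proof -
  define B where "B = {\<sigma>. a \<notin> \<sigma> \<and> insert a \<sigma> \<in> K}"
  define A where "A = {\<sigma>\<in>K. a \<notin> \<sigma>}"
  have BU: "B \<subseteq> Pow U" using KU unfolding B_def by blast
  have BK: "\<forall>\<sigma>\<in>B. a \<notin> \<sigma> \<and> insert a \<sigma> \<in> K" unfolding B_def by blast
  have BA: "B \<subseteq> A"
  proof
    fix \<sigma> assume "\<sigma> \<in> B"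
    hence "a \<notin> \<sigma>" "insert a \<sigma> \<in> K" unfolding B_def by auto
    moreover have "insert a \<sigma> - {a} \<in> K" using dc \<open>insert a \<sigma> \<in> K\<close> unfolding dclosed_def by (meson insertI1)
    ultimately show "\<sigma> \<in> A" unfolding A_def by simp
  qed
  obtain y :: "'a set \<Rightarrow> 'k" where y: "y \<in> chains B d" "boundary U y = (\<lambda>_. 0)"
    and nb: "\<not> (\<exists>b \<in> chains B (d + 1). boundary U b = y)"
    using H unfolding reduced_homology_nonzero_def B_def by blast
  have sy: "supp_in U y" using ch_supp[OF BU y(1)] .
  show ?thesis
  proof (cases "\<exists>b \<in> chains A (d + 1). boundary U b = y")
    case False
    then show ?thesis unfolding reduced_homology_nonzero_def A_def using ch_mono[OF BA y(1)] y(2)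
      unfolding A_def by blast
  next
    case True
    then obtain b where b: "b \<in> chains A (d+1)" "boundary U b = y" by blast
    have bK: "b \<in> chains K (d+1)" using ch_mono[OF _ b(1)] unfolding A_def by blast
    have cy: "cone a y \<in> chains K (d+1)" using ch_cone[OF U BU BK y(1)] .
    define z where "z = (\<lambda>\<sigma>. cone a y \<sigma> - b \<sigma>)"
    have zK: "z \<in> chains K (d+1)" unfolding z_def by (rule ch_diff[OF cy bK])
    have bz: "boundary U z = (\<lambda>_. 0)"
    proof
      fix \<tau>
      show "boundary U z \<tau> = 0" unfolding z_def bd_diff b(2) using cone_id[OF U aU sy] y(2)
        by (simp add: cone_def)
    qed
    have ynoa: "\<forall>\<sigma>. a \<in> \<sigma> \<longrightarrow> y \<sigma> = 0" using y(1) BK unfolding chains_def by blast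
    have cb: "contr a b = (\<lambda>_. 0)"
      by (rule contr_noa) (use b(1) in \<open>auto simp: chains_def A_def\<close>)
    have czy: "contr a z = y" unfolding z_def contr_diff contr_cone[OF ynoa] cb by simp
    have "\<not> (\<exists>c \<in> chains K (d + 1 + 1). boundary U c = z)"
    proof
      assume "\<exists>c \<in> chains K (d + 1 + 1). boundary U c = z"
      then obtain c where c: "c \<in> chains K (d+1+1)" "boundary U c = z" by blast
      have sc: "supp_in U c" using ch_supp[OF KU c(1)] .
      have "contr a c \<in> chains B (d+1+1-1)" unfolding B_def using ch_contr[OF U KU c(1)] .
      hence "contr a c \<in> chains B (d+1)" by (simp add: add.commute)
      hence m: "(\<lambda>\<sigma>. - contr a c \<sigma>) \<in> chains B (d+1)" by (rule ch_uminus)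
      have "boundary U (\<lambda>\<sigma>. - contr a c \<sigma>) = y"
      proof
        fix \<tau>
        have "boundary U (\<lambda>\<sigma>. - contr a c \<sigma>) \<tau> = - boundary U (contr a c) \<tau>"
          unfolding boundary_def by (simp add: sum_negf)
        also have "\<dots> = contr a (boundary U c) \<tau>" using contr_bd[OF U sc] by simp
        also have "\<dots> = y \<tau>" using c(2) czy by simp
        finally show "boundary U (\<lambda>\<sigma>. - contr a c \<sigma>) \<tau> = y \<tau>" .
      qed
      then show False using nb m by blast
    qed
    then show ?thesis unfolding reduced_homology_nonzero_def using zK bz by blast
  qed
qed

lemma cone_acyclic:
  fixes k :: "'k::field itself" and K :: "'a::linorder set set"
  assumes U: "finite U" and KU: "K \<subseteq> Pow U" and aU: "a \<in> U"
    and cl: "\<forall>\<sigma>\<in>K. insert a \<sigma> \<in> K"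
  shows "\<not> reduced_homology_nonzero k U K d"
proof
  assume "reduced_homology_nonzero k U K d"
  then obtain z :: "'a set \<Rightarrow> 'k" where z: "z \<in> chains K d" "boundary U z = (\<lambda>_. 0)"
    and nb: "\<not> (\<exists>b \<in> chains K (d + 1). boundary U b = z)"
    unfolding reduced_homology_nonzero_def by blast
  have sz: "supp_in U z" using ch_supp[OF KU z(1)] .
  have "cone a z \<in> chains K (d+1)"
    unfolding chains_def mem_Collect_eq
  proof (intro allI impI)
    fix \<rho> assume "cone a z \<rho> \<noteq> 0"
    hence r: "a \<in> \<rho>" "z (\<rho> - {a}) \<noteq> 0" unfolding cone_def by (auto split: if_splits)
    hence B: "\<rho> - {a} \<in> K" "int (card (\<rho> - {a})) = d + 1" using z(1) unfolding chains_def by auto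
    have "\<rho> - {a} \<subseteq> U" using B KU by blast
    hence f: "finite (\<rho> - {a})" using U by (rule finite_subset)
    have e: "insert a (\<rho> - {a}) = \<rho>" using r by auto
    have "card \<rho> = card (\<rho> - {a}) + 1" using f e by (metis Diff_iff card_insert_disjoint insertI1 Suc_eq_plus1)
    moreover have "\<rho> \<in> K" using cl B e by metis
    ultimately show "\<rho> \<in> K \<and> int (card \<rho>) = d + 1 + 1" using B by simp
  qed
  moreover have "boundary U (cone a z) = z"
  proof
    fix \<tau> show "boundary U (cone a z) \<tau> = z \<tau>" using cone_id[OF U aU sz] z(2) by (simp add: cone_def)
  qed
  ultimately show False using nb by blast
qed



lemma bd_nz: "boundary U c \<tau> \<noteq> 0 \<Longrightarrow> \<exists>b\<in>U - \<tau>. c (insert b \<tau>) \<noteq> 0"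
proof (rule ccontr)
  assume nz: "boundary U c \<tau> \<noteq> 0" and "\<not> (\<exists>b\<in>U - \<tau>. c (insert b \<tau>) \<noteq> 0)"
  then have "boundary U c \<tau> = 0" unfolding boundary_def by (intro sum.neutral) auto
  then show False using nz by simp
qed

lemma card_rm: "w \<in> \<rho> \<Longrightarrow> \<rho> - {w} \<subseteq> U \<Longrightarrow> finite U \<Longrightarrow> int (card \<rho>) = int (card (\<rho> - {w})) + 1"
proof -
  assume a: "w \<in> \<rho>" "\<rho> - {w} \<subseteq> U" "finite U"
  hence "finite (\<rho> - {w})" using finite_subset by blast
  hence "finite \<rho>" by simp
  moreover have "card \<rho> > 0" using a(1) \<open>finite \<rho>\<close> card_gt_0_iff by blast
  ultimately show ?thesis using a(1) by (simp add: card_Diff_singleton_if of_nat_diff)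
qed

lemma key_cone:
  fixes c :: "'a::linorder set \<Rightarrow> 'k::field"
  assumes U: "finite U" and K'U: "K' \<subseteq> Pow U"
    and cc: "\<forall>\<tau>\<in>K. \<forall>\<sigma>\<in>K'. \<sigma> \<notin> K \<longrightarrow> \<tau> \<subseteq> \<sigma> \<longrightarrow> insert w \<tau> \<in> K"
    and c: "c \<in> chains K' (e+1)"
    and bN: "boundary U (\<lambda>\<sigma>. if \<sigma> \<in> K then 0 else c \<sigma>) \<in> chains K e"
  shows "cone w (boundary U (\<lambda>\<sigma>. if \<sigma> \<in> K then 0 else c \<sigma>)) \<in> chains K (e+1)"
  unfolding chains_def mem_Collect_eq
proof (intro allI impI)
  define cN where "cN = (\<lambda>\<sigma>. if \<sigma> \<in> K then 0 else c \<sigma>)"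
  fix \<rho> assume "cone w (boundary U (\<lambda>\<sigma>. if \<sigma> \<in> K then 0 else c \<sigma>)) \<rho> \<noteq> 0"
  hence r: "w \<in> \<rho>" "boundary U cN (\<rho> - {w}) \<noteq> 0" unfolding cone_def cN_def by (auto split: if_splits)
  hence T: "\<rho> - {w} \<in> K" "int (card (\<rho> - {w})) = e + 1" using bN unfolding chains_def cN_def by auto
  obtain b where b: "b \<in> U - (\<rho> - {w})" "cN (insert b (\<rho> - {w})) \<noteq> 0" using bd_nz[OF r(2)] by blast
  hence s: "insert b (\<rho> - {w}) \<notin> K" "c (insert b (\<rho> - {w})) \<noteq> 0" unfolding cN_def by (auto split: if_splits)
  hence "insert b (\<rho> - {w}) \<in> K'" using c unfolding chains_def by blast
  moreover have "\<rho> - {w} \<subseteq> insert b (\<rho> - {w})" by blast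
  ultimately have "insert w (\<rho> - {w}) \<in> K" using cc T(1) s(1) by blast
  moreover have e: "insert w (\<rho> - {w}) = \<rho>" using r by auto
  moreover have "\<rho> - {w} \<subseteq> U" using \<open>insert b (\<rho> - {w}) \<in> K'\<close> K'U by blast
  ultimately show "\<rho> \<in> K \<and> int (card \<rho>) = e + 1 + 1"
    using T card_rm[OF r(1) _ U] by simp
qed

lemma cone_transfer:
  fixes k :: "'k::field itself" and K :: "'a::linorder set set"
  assumes U: "finite U" and KK': "K \<subseteq> K'" and K'U: "K' \<subseteq> Pow U"
    and dc: "dclosed K" and dc': "dclosed K'" and wU: "w \<in> U"
    and cb: "\<forall>\<sigma>\<in>K'. \<sigma> \<notin> K \<longrightarrow> insert w \<sigma> \<in> K'"
    and cc: "\<forall>\<tau>\<in>K. \<forall>\<sigma>\<in>K'. \<sigma> \<notin> K \<longrightarrow> \<tau> \<subseteq> \<sigma> \<longrightarrow> insert w \<tau> \<in> K"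
  shows "reduced_homology_nonzero k U K d \<longleftrightarrow> reduced_homology_nonzero k U K' d"
proof
  have KU: "K \<subseteq> Pow U" using KK' K'U by blast
  assume "reduced_homology_nonzero k U K d"
  then obtain z :: "'a set \<Rightarrow> 'k" where z: "z \<in> chains K d" "boundary U z = (\<lambda>_. 0)"
    and nb: "\<not> (\<exists>b \<in> chains K (d + 1). boundary U b = z)"
    unfolding reduced_homology_nonzero_def by blast
  have "\<not> (\<exists>b \<in> chains K' (d + 1). boundary U b = z)"
  proof
    assume "\<exists>b \<in> chains K' (d + 1). boundary U b = z"
    then obtain b where b: "b \<in> chains K' (d+1)" "boundary U b = z" by blast
    define bN where "bN = (\<lambda>\<sigma>. if \<sigma> \<in> K then 0 else b \<sigma>)"
    define bK where "bK = (\<lambda>\<sigma>. if \<sigma> \<in> K then b \<sigma> else 0)"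
    have bKc: "bK \<in> chains K (d+1)" using b(1) unfolding bK_def chains_def by auto
    have bNc: "bN \<in> chains K' (d+1)" using b(1) unfolding bN_def chains_def by auto
    have sbN: "supp_in U bN" using ch_supp[OF K'U bNc] .
    have bsplit: "b = (\<lambda>\<sigma>. bK \<sigma> + bN \<sigma>)" unfolding bK_def bN_def by auto
    have dbN: "boundary U bN = (\<lambda>\<tau>. z \<tau> - boundary U bK \<tau>)"
      using b(2) unfolding bsplit bd_add by auto
    have dbNc: "boundary U bN \<in> chains K d"
      unfolding dbN by (rule ch_diff[OF z(1) ch_bd[OF U KU dc bKc]])
    have cN: "cone w (boundary U bN) \<in> chains K (d+1)"
      using key_cone[OF U K'U cc b(1)] dbNc unfolding bN_def by blast
    define b'' where "b'' = (\<lambda>\<sigma>. bK \<sigma> + cone w (boundary U bN) \<sigma>)"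
    have "b'' \<in> chains K (d+1)" unfolding b''_def by (rule ch_add[OF bKc cN])
    moreover have "b'' = (\<lambda>\<sigma>. b \<sigma> - boundary U (cone w bN) \<sigma>)"
      unfolding b''_def using cone_id[OF U wU sbN] unfolding bsplit by auto
    moreover have "boundary U (\<lambda>\<sigma>. b \<sigma> - boundary U (cone w bN) \<sigma>) = z"
      unfolding bd_diff b(2) dd0[OF U cone_supp[OF wU sbN]] by simp
    ultimately show False using nb by metis
  qed
  then show "reduced_homology_nonzero k U K' d"
    unfolding reduced_homology_nonzero_def using ch_mono[OF KK' z(1)] z(2) by blast
next
  have KU: "K \<subseteq> Pow U" using KK' K'U by blast
  assume "reduced_homology_nonzero k U K' d"
  then obtain z :: "'a set \<Rightarrow> 'k" where z: "z \<in> chains K' d" "boundary U z = (\<lambda>_. 0)"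
    and nb: "\<not> (\<exists>b \<in> chains K' (d + 1). boundary U b = z)"
    unfolding reduced_homology_nonzero_def by blast
  define zN where "zN = (\<lambda>\<sigma>. if \<sigma> \<in> K then 0 else z \<sigma>)"
  define zK where "zK = (\<lambda>\<sigma>. if \<sigma> \<in> K then z \<sigma> else 0)"
  have zKc: "zK \<in> chains K d" using z(1) unfolding zK_def chains_def by auto
  have zNc: "zN \<in> chains (K' - K) d" using z(1) unfolding zN_def chains_def by auto
  have szN: "supp_in U zN" using ch_supp[OF _ zNc] K'U by blast
  have zsplit: "z = (\<lambda>\<sigma>. zK \<sigma> + zN \<sigma>)" unfolding zK_def zN_def by auto
  have dzN: "boundary U zN = (\<lambda>\<tau>. - boundary U zK \<tau>)"
    using z(2) unfolding zsplit bd_add by (auto simp: fun_eq_iff eq_neg_iff_add_eq_0 add.commute)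
  have dzKc: "boundary U zK \<in> chains K (d - 1)" using ch_bd[OF U KU dc, of zK "d-1"] zKc by simp
  have dzNc: "boundary U zN \<in> chains K (d - 1)"
    unfolding dzN by (rule ch_uminus[OF dzKc])
  have cN: "cone w (boundary U zN) \<in> chains K (d - 1 + 1)"
    using key_cone[OF U K'U cc, of z "d - 1"] z(1) dzNc unfolding zN_def by simp
  define z' where "z' = (\<lambda>\<sigma>. z \<sigma> - boundary U (cone w zN) \<sigma>)"
  have z'e: "z' = (\<lambda>\<sigma>. zK \<sigma> + cone w (boundary U zN) \<sigma>)"
    unfolding z'_def using cone_id[OF U wU szN] unfolding zsplit by auto
  have z'c: "z' \<in> chains K d" unfolding z'e by (rule ch_add[OF zKc]) (use cN in simp)
  have bz': "boundary U z' = (\<lambda>_. 0)"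
    unfolding z'_def bd_diff z(2) dd0[OF U cone_supp[OF wU szN]] by simp
  have czN: "cone w zN \<in> chains K' (d+1)"
    unfolding chains_def mem_Collect_eq
  proof (intro allI impI)
    fix \<rho> assume "cone w zN \<rho> \<noteq> 0"
    hence r: "w \<in> \<rho>" "zN (\<rho> - {w}) \<noteq> 0" unfolding cone_def by (auto split: if_splits)
    hence T: "\<rho> - {w} \<in> K'" "\<rho> - {w} \<notin> K" "int (card (\<rho> - {w})) = d + 1"
      using zNc unfolding chains_def by auto
    have "insert w (\<rho> - {w}) \<in> K'" using cb T by blast
    moreover have e: "insert w (\<rho> - {w}) = \<rho>" using r by auto
    moreover have "\<rho> - {w} \<subseteq> U" using T K'U by blast
    ultimately show "\<rho> \<in> K' \<and> int (card \<rho>) = d + 1 + 1"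
      using T card_rm[OF r(1) _ U] by simp
  qed
  have "\<not> (\<exists>b \<in> chains K (d + 1). boundary U b = z')"
  proof
    assume "\<exists>b \<in> chains K (d + 1). boundary U b = z'"
    then obtain b where b: "b \<in> chains K (d+1)" "boundary U b = z'" by blast
    have "(\<lambda>\<sigma>. b \<sigma> + cone w zN \<sigma>) \<in> chains K' (d+1)"
      by (rule ch_add[OF ch_mono[OF KK' b(1)] czN])
    moreover have "boundary U (\<lambda>\<sigma>. b \<sigma> + cone w zN \<sigma>) = z"
      unfolding bd_add b(2) z'_def by simp
    ultimately show False using nb by blast
  qed
  then show "reduced_homology_nonzero k U K d"
    unfolding reduced_homology_nonzero_def using z'c bz' by blast
qed



definition IC :: "'a set set \<Rightarrow> 'a set \<Rightarrow> 'a set set" where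
  "IC F S = ind_complex S (induced_edges F S)"

definition sg :: "'a set set \<Rightarrow> bool" where
  "sg F \<longleftrightarrow> (\<forall>e\<in>F. \<exists>p q. p \<noteq> q \<and> e = {p, q})"

lemma IC_iff: "\<sigma> \<in> IC F S \<longleftrightarrow> \<sigma> \<subseteq> S \<and> (\<forall>e\<in>F. \<not> e \<subseteq> \<sigma>)"
  unfolding IC_def ind_complex_def induced_edges_def by blast

lemma IC_Pow: "IC F S \<subseteq> Pow S"
  by (auto simp: IC_iff)

lemma IC_dclosed: "dclosed (IC F S)"
  unfolding dclosed_def by (auto simp: IC_iff) (meson Diff_subset subset_trans)

lemma IC_A: "{\<sigma> \<in> IC F S. a \<notin> \<sigma>} = IC F (S - {a})"
  by (auto simp: IC_iff)

lemma IC_B: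
  assumes "sg F" "a \<in> S"
  shows "{\<sigma>. a \<notin> \<sigma> \<and> insert a \<sigma> \<in> IC F S} = IC F (S - insert a {y. {a, y} \<in> F})"
proof (intro set_eqI iffI)
  fix \<sigma> assume "\<sigma> \<in> {\<sigma>. a \<notin> \<sigma> \<and> insert a \<sigma> \<in> IC F S}"
  hence h: "a \<notin> \<sigma>" "insert a \<sigma> \<subseteq> S" "\<forall>e\<in>F. \<not> e \<subseteq> insert a \<sigma>" unfolding IC_iff by auto
  have "\<forall>y\<in>\<sigma>. {a, y} \<notin> F"
  proof (intro ballI notI)
    fix y assume "y \<in> \<sigma>" "{a, y} \<in> F"
    moreover have "{a, y} \<subseteq> insert a \<sigma>" using \<open>y \<in> \<sigma>\<close> by simp
    ultimately show False using h(3) by blast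
  qed
  then show "\<sigma> \<in> IC F (S - insert a {y. {a, y} \<in> F})" unfolding IC_iff using h by blast
next
  fix \<sigma> assume "\<sigma> \<in> IC F (S - insert a {y. {a, y} \<in> F})"
  hence h: "\<sigma> \<subseteq> S" "a \<notin> \<sigma>" "\<forall>y\<in>\<sigma>. {a, y} \<notin> F" "\<forall>e\<in>F. \<not> e \<subseteq> \<sigma>" unfolding IC_iff by auto
  have "\<forall>e\<in>F. \<not> e \<subseteq> insert a \<sigma>"
  proof (intro ballI notI)
    fix e assume e: "e \<in> F" "e \<subseteq> insert a \<sigma>"
    obtain p q where pq: "p \<noteq> q" "e = {p, q}" using assms(1) e(1) unfolding sg_def by blast
    show False
    proof (cases "a \<in> e")
      case False then show ?thesis using e h(4) by blast
    next
      case True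
      then have "(p = a \<and> q \<in> \<sigma>) \<or> (q = a \<and> p \<in> \<sigma>)" using pq e(2) by auto
      then show ?thesis using h(3) e(1) pq(2) by (auto simp: insert_commute)
    qed
  qed
  then show "\<sigma> \<in> {\<sigma>. a \<notin> \<sigma> \<and> insert a \<sigma> \<in> IC F S}" unfolding IC_iff using h assms(2) by blast
qed

lemma bd_change:
  assumes "supp_in S c" "S \<subseteq> U" "finite U"
  shows "boundary S c = boundary U c"
proof
  fix \<tau>
  show "boundary S c \<tau> = boundary U c \<tau>"
  proof (cases "\<tau> \<subseteq> S")
    case True
    show ?thesis unfolding boundary_def
      by (rule sum.mono_neutral_left) (use assms True in \<open>auto simp: supp_in_def\<close>)
  next
    case False
    have "boundary S c \<tau> = 0" "boundary U c \<tau> = 0" unfolding boundary_def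
      by (intro sum.neutral ballI; use assms False in \<open>auto simp: supp_in_def\<close>)+
    then show ?thesis by simp
  qed
qed

lemma rhn_change:
  assumes "K \<subseteq> Pow S" "S \<subseteq> U" "finite U"
  shows "reduced_homology_nonzero k S K d \<longleftrightarrow> reduced_homology_nonzero k U K d"
proof -
  have "\<And>c d. c \<in> chains K d \<Longrightarrow> boundary S c = boundary U c"
    using bd_change ch_supp assms by blast
  then show ?thesis unfolding reduced_homology_nonzero_def by metis
qed



lemma transfer:
  fixes k :: "'k::field itself" and V :: "'a::linorder set"
  assumes V: "finite V" and sg1: "sg F1"
    and H1: "\<And>S. S \<subseteq> V \<Longrightarrow> u \<notin> S \<or> v \<notin> S \<Longrightarrow> IC F1 S = IC F2 S"
    and H2: "\<And>S. S \<subseteq> V \<Longrightarrow> w \<in> S \<Longrightarrow> u \<in> S \<Longrightarrow> v \<in> S \<Longrightarrow>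
              reduced_homology_nonzero k V (IC F1 S) d \<Longrightarrow> reduced_homology_nonzero k V (IC F2 S) d"
    and a: "a = u \<or> a = v" and inV: "w \<in> V" "x \<in> V" and wuv: "w \<noteq> u" "w \<noteq> v"
    and wu: "{w,u} \<notin> F1" "{w,v} \<notin> F1" and wx: "{w,x} \<in> F1"
    and xn: "\<forall>y. {x,y} \<in> F1 \<longrightarrow> y = a \<or> y = w"
    and SV: "S \<subseteq> V" and P: "reduced_homology_nonzero k V (IC F1 S) d"
  shows "\<exists>T\<subseteq>V. reduced_homology_nonzero k V (IC F2 T) d"
proof (cases "u \<notin> S \<or> v \<notin> S")
  case True
  then show ?thesis using H1[OF SV True] P SV by auto
next
  case False
  hence uS: "u \<in> S" "v \<in> S" by auto
  show ?thesis
  proof (cases "w \<in> S")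
    case True
    then show ?thesis using H2[OF SV True uS P] SV by blast
  next
    case wS: False
    define Nw where "Nw = {y. {w, y} \<in> F1}"
    have xw: "x \<noteq> w"
    proof
      assume "x = w"
      then have "{w, x} = {w}" by simp
      moreover obtain p q where pq: "p \<noteq> q" "{w, x} = {p, q}" using wx sg1 unfolding sg_def by blast
      ultimately have "p \<in> {w}" "q \<in> {w}" by auto
      then show False using pq(1) by simp
    qed
    have xNw: "x \<in> Nw" unfolding Nw_def using wx by simp
    have wSV: "insert w S \<subseteq> V" using SV inV by blast
    have K1U: "IC F1 (insert w S) \<subseteq> Pow V" using IC_Pow[of F1 "insert w S"] wSV by blast
    have A1: "{\<sigma> \<in> IC F1 (insert w S). w \<notin> \<sigma>} = IC F1 S"
      using IC_A[of F1 "insert w S" w] wS by simp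
    have B1: "{\<sigma>. w \<notin> \<sigma> \<and> insert w \<sigma> \<in> IC F1 (insert w S)} = IC F1 (S - Nw)"
    proof -
      have "insert w S - insert w Nw = S - Nw" using wS by blast
      then show ?thesis using IC_B[OF sg1, of w "insert w S"] unfolding Nw_def by simp
    qed
    have "reduced_homology_nonzero k V (IC F1 (insert w S)) d \<or> reduced_homology_nonzero k V (IC F1 (S - Nw)) d"
      using lem_ii[OF V K1U IC_dclosed inV(1), of k d] P unfolding A1 B1 by blast
    then show ?thesis
    proof
      assume "reduced_homology_nonzero k V (IC F1 (insert w S)) d"
      then show ?thesis using H2[OF wSV _ _ _] uS wSV by blast
    next
      assume P2: "reduced_homology_nonzero k V (IC F1 (S - Nw)) d"
      define S2 where "S2 = S - Nw"
      have uS2: "u \<in> S2" "v \<in> S2" using uS wu unfolding S2_def Nw_def by auto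
      have aS2: "a \<in> S2" using a uS2 by blast
      have S2V: "S2 \<subseteq> V" using SV unfolding S2_def by blast
      have aV: "a \<in> V" using aS2 S2V by blast
      have K2U: "IC F1 S2 \<subseteq> Pow V" using IC_Pow[of F1 S2] S2V by blast
      define L where "L = S2 - insert a {y. {a, y} \<in> F1}"
      have "reduced_homology_nonzero k V (IC F1 (S2 - {a})) d \<or> reduced_homology_nonzero k V (IC F1 L) (d - 1)"
        using lem_i[OF V K2U IC_dclosed aV, of k d] P2 IC_A[of F1 S2 a] IC_B[OF sg1 aS2]
        unfolding S2_def L_def by simp
      then show ?thesis
      proof
        assume "reduced_homology_nonzero k V (IC F1 (S2 - {a})) d"
        moreover have "u \<notin> S2 - {a} \<or> v \<notin> S2 - {a}" using a by blast
        moreover have "S2 - {a} \<subseteq> V" using S2V by blast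
        ultimately have "IC F1 (S2 - {a}) = IC F2 (S2 - {a})" "reduced_homology_nonzero k V (IC F1 (S2 - {a})) d" "S2 - {a} \<subseteq> V"
          using H1 by blast+
        then show ?thesis by auto
      next
        assume PL: "reduced_homology_nonzero k V (IC F1 L) (d - 1)"
        define T where "T = insert w (insert x L)"
        have LS2: "L \<subseteq> S2" unfolding L_def by blast
        have aL: "a \<notin> L" unfolding L_def by blast
        have wL: "w \<notin> L" using LS2 wS unfolding S2_def by blast
        have LNw: "L \<inter> Nw = {}" using LS2 unfolding S2_def by blast
        have TV: "T \<subseteq> V" unfolding T_def using LS2 S2V inV by blast
        have K3U: "IC F1 T \<subseteq> Pow V" using IC_Pow[of F1 T] TV by blast
        have A3: "{\<sigma> \<in> IC F1 T. w \<notin> \<sigma>} = IC F1 (insert x L)"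
        proof -
          have "T - {w} = insert x L" unfolding T_def using wL xw by blast
          then show ?thesis using IC_A[of F1 T w] by simp
        qed
        have B3: "{\<sigma>. w \<notin> \<sigma> \<and> insert w \<sigma> \<in> IC F1 T} = IC F1 L"
        proof -
          have "T - insert w Nw = L" unfolding T_def using wL xNw LNw by blast
          then show ?thesis using IC_B[OF sg1, of w T] unfolding Nw_def T_def by simp
        qed
        have acyc: "\<not> reduced_homology_nonzero k V (IC F1 (insert x L)) (d - 1)"
        proof (rule cone_acyclic[OF V _ inV(2)])
          show "IC F1 (insert x L) \<subseteq> Pow V" using IC_Pow[of F1 "insert x L"] TV unfolding T_def by blast
          show "\<forall>\<sigma>\<in>IC F1 (insert x L). insert x \<sigma> \<in> IC F1 (insert x L)"
          proof
            fix \<sigma> assume "\<sigma> \<in> IC F1 (insert x L)"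
            hence h: "\<sigma> \<subseteq> insert x L" "\<forall>e\<in>F1. \<not> e \<subseteq> \<sigma>" unfolding IC_iff by auto
            have "\<forall>e\<in>F1. \<not> e \<subseteq> insert x \<sigma>"
            proof (intro ballI notI)
              fix e assume e: "e \<in> F1" "e \<subseteq> insert x \<sigma>"
              obtain p q where pq: "p \<noteq> q" "e = {p, q}" using sg1 e(1) unfolding sg_def by blast
              show False
              proof (cases "x \<in> e")
                case False then show ?thesis using e h(2) by blast
              next
                case True
                then obtain y where y: "e = {x, y}" "y \<noteq> x" using pq by auto
                have "y \<in> L" using y e(2) h(1) by blast
                moreover have "y = a \<or> y = w" using xn e(1) y(1) by blast
                ultimately show False using aL wL by blast
              qed
            qed
            moreover have "insert x \<sigma> \<subseteq> insert x L" using h(1) by blast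
            ultimately show "insert x \<sigma> \<in> IC F1 (insert x L)" unfolding IC_iff by blast
          qed
        qed
        have "reduced_homology_nonzero k V (IC F1 T) (d - 1 + 1) \<or> reduced_homology_nonzero k V (IC F1 (insert x L)) (d - 1)"
          using lem_iii[OF V K3U IC_dclosed inV(1), of k "d - 1"] PL unfolding A3 B3 by blast
        hence P3: "reduced_homology_nonzero k V (IC F1 T) d" using acyc by simp
        have "a \<noteq> w" using a wuv by blast
        moreover have "a \<noteq> x"
        proof
          assume "a = x"
          then have "{w, a} \<in> F1" using wx by simp
          then show False using a wu by blast
        qed
        ultimately have "a \<notin> T" unfolding T_def using aL by blast
        hence "u \<notin> T \<or> v \<notin> T" using a by blast
        then have "IC F1 T = IC F2 T" by (rule H1[OF TV])
        then show ?thesis using P3 TV by auto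
      qed
    qed
  qed
qed



lemma ct_graph:
  fixes k :: "'k::field itself" and V :: "'a::linorder set"
  assumes V: "finite V" and sgE: "sg E" and EV: "\<forall>e\<in>E. e \<subseteq> V"
    and uv: "{u,v} \<in> E" "u \<noteq> v" and wuv: "w \<noteq> u" "w \<noteq> v"
    and nwu: "{w,u} \<notin> E" "{w,v} \<notin> E"
    and Wiso: "\<forall>y\<in>V. {w,y} \<in> E \<longrightarrow> {u,y} \<in> E \<or> {v,y} \<in> E"
    and SV: "S \<subseteq> V" and wS: "w \<in> S" and uS: "u \<in> S" "v \<in> S"
  shows "reduced_homology_nonzero k V (IC E S) d \<longleftrightarrow> reduced_homology_nonzero k V (IC (E - {{u,v}}) S) d"
proof (rule cone_transfer[OF V])
  show "IC E S \<subseteq> IC (E - {{u, v}}) S" by (auto simp: IC_iff)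
  show "IC (E - {{u, v}}) S \<subseteq> Pow V" using IC_Pow[of "E - {{u, v}}" S] SV by blast
  show "dclosed (IC E S)" "dclosed (IC (E - {{u, v}}) S)" by (rule IC_dclosed)+
  show "w \<in> V" using wS SV by blast
  have cb: "\<forall>\<sigma>\<in>IC (E - {{u, v}}) S. \<sigma> \<notin> IC E S \<longrightarrow> insert w \<sigma> \<in> IC (E - {{u, v}}) S"
  proof (intro ballI impI)
    fix \<sigma> assume s1: "\<sigma> \<in> IC (E - {{u, v}}) S" and s2: "\<sigma> \<notin> IC E S"
    have h: "\<sigma> \<subseteq> S" "\<forall>e\<in>E - {{u,v}}. \<not> e \<subseteq> \<sigma>" using s1 unfolding IC_iff by auto
    have "\<exists>e\<in>E. e \<subseteq> \<sigma>" using s2 h(1) unfolding IC_iff by auto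
    then obtain e0 where e0: "e0 \<in> E" "e0 \<subseteq> \<sigma>" by blast
    hence "e0 = {u,v}" using h(2) by blast
    hence uvs: "u \<in> \<sigma>" "v \<in> \<sigma>" using e0 by auto
    have "\<forall>e\<in>E - {{u,v}}. \<not> e \<subseteq> insert w \<sigma>"
    proof (intro ballI notI)
      fix e assume e: "e \<in> E - {{u,v}}" "e \<subseteq> insert w \<sigma>"
      obtain p q where pq: "p \<noteq> q" "e = {p, q}" using sgE e(1) unfolding sg_def by blast
      show False
      proof (cases "w \<in> e")
        case False then show ?thesis using e h(2) by blast
      next
        case True
        then obtain y where y: "e = {w, y}" "y \<noteq> w" using pq by auto
        have yS: "y \<in> \<sigma>" using y e(2) by blast
        have yV: "y \<in> V" using EV e(1) y(1) by blast
        have eE: "{w, y} \<in> E" using e(1) y(1) by blast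
        have "{u,y} \<in> E \<or> {v,y} \<in> E" using Wiso yV eE by blast
        then show False
        proof
          assume uy: "{u,y} \<in> E"
          show False
          proof (cases "y = v")
            case True then show False using eE nwu by simp
          next
            case False
            hence "{u,y} \<noteq> {u,v}" using uv(2) by (auto simp: doubleton_eq_iff)
            then have "{u,y} \<in> E - {{u,v}}" using uy by simp
            moreover have "{u,y} \<subseteq> \<sigma>" using uvs yS by simp
            ultimately show False using h(2) by blast
          qed
        next
          assume vy: "{v,y} \<in> E"
          show False
          proof (cases "y = u")
            case True then show False using eE nwu by simp
          next
            case False
            hence "{v,y} \<noteq> {u,v}" using uv(2) by (auto simp: doubleton_eq_iff)
            then have "{v,y} \<in> E - {{u,v}}" using vy by simp
            moreover have "{v,y} \<subseteq> \<sigma>" using uvs yS by simp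
            ultimately show False using h(2) by blast
          qed
        qed
      qed
    qed
    then show "insert w \<sigma> \<in> IC (E - {{u, v}}) S" unfolding IC_iff using h(1) wS by blast
  qed
  then show "\<forall>\<sigma>\<in>IC (E - {{u, v}}) S. \<sigma> \<notin> IC E S \<longrightarrow> insert w \<sigma> \<in> IC (E - {{u, v}}) S" .
  show "\<forall>\<tau>\<in>IC E S. \<forall>\<sigma>\<in>IC (E - {{u, v}}) S. \<sigma> \<notin> IC E S \<longrightarrow> \<tau> \<subseteq> \<sigma> \<longrightarrow> insert w \<tau> \<in> IC E S"
  proof (intro ballI impI)
    fix \<tau> \<sigma> assume t: "\<tau> \<in> IC E S" and s1: "\<sigma> \<in> IC (E - {{u, v}}) S" and s2: "\<sigma> \<notin> IC E S"
      and ts: "\<tau> \<subseteq> \<sigma>"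
    have ws: "insert w \<sigma> \<in> IC (E - {{u, v}}) S" using cb s1 s2 by blast
    have ht: "\<tau> \<subseteq> S" "\<forall>e\<in>E. \<not> e \<subseteq> \<tau>" using t unfolding IC_iff by auto
    have hw: "\<forall>e\<in>E - {{u,v}}. \<not> e \<subseteq> insert w \<sigma>" using ws unfolding IC_iff by auto
    have "\<forall>e\<in>E. \<not> e \<subseteq> insert w \<tau>"
    proof (intro ballI notI)
      fix e assume e: "e \<in> E" "e \<subseteq> insert w \<tau>"
      show False
      proof (cases "e = {u,v}")
        case True
        hence "{u,v} \<subseteq> \<tau>" using e(2) wuv by auto
        then show False using ht(2) uv(1) by blast
      next
        case False
        then show False using hw e ts by blast
      qed
    qed
    then show "insert w \<tau> \<in> IC E S" unfolding IC_iff using ht(1) wS by blast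
  qed
qed



lemma reg_alt:
  fixes V :: "'a::linorder set"
  assumes V: "finite V"
  shows "reg TYPE('k::field) V F = Max {j::nat. \<exists>S\<subseteq>V. reduced_homology_nonzero TYPE('k) V (IC F S) (int j - 1)}"
proof -
  have eq: "\<And>S d. S \<subseteq> V \<Longrightarrow> reduced_homology_nonzero TYPE('k) S (IC F S) d = reduced_homology_nonzero TYPE('k) V (IC F S) d"
    by (rule rhn_change[OF IC_Pow _ V])
  have "{j::nat. \<exists>S\<subseteq>V. reduced_homology_nonzero TYPE('k) S (IC F S) (int j - 1)}
     = {j::nat. \<exists>S\<subseteq>V. reduced_homology_nonzero TYPE('k) V (IC F S) (int j - 1)}"
  proof (intro Collect_cong iffI)
    fix j assume "\<exists>S\<subseteq>V. reduced_homology_nonzero TYPE('k) S (IC F S) (int j - 1)"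
    then obtain S where "S \<subseteq> V" "reduced_homology_nonzero TYPE('k) S (IC F S) (int j - 1)" by blast
    then show "\<exists>S\<subseteq>V. reduced_homology_nonzero TYPE('k) V (IC F S) (int j - 1)" using eq by blast
  next
    fix j assume "\<exists>S\<subseteq>V. reduced_homology_nonzero TYPE('k) V (IC F S) (int j - 1)"
    then obtain S where "S \<subseteq> V" "reduced_homology_nonzero TYPE('k) V (IC F S) (int j - 1)" by blast
    then show "\<exists>S\<subseteq>V. reduced_homology_nonzero TYPE('k) S (IC F S) (int j - 1)" using eq by blast
  qed
  then show ?thesis unfolding reg_def IC_def by simp
qed

lemma IC_eq:
  assumes "u \<notin> S \<or> v \<notin> S"
  shows "IC E S = IC (E - {{u,v}}) S"
proof (intro set_eqI)
  fix \<sigma>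
  show "\<sigma> \<in> IC E S \<longleftrightarrow> \<sigma> \<in> IC (E - {{u,v}}) S"
  proof (cases "\<sigma> \<subseteq> S")
    case True
    hence "\<not> {u,v} \<subseteq> \<sigma>" using assms by blast
    then show ?thesis unfolding IC_iff using True by blast
  next
    case False then show ?thesis unfolding IC_iff by blast
  qed
qed

theorem mainTheorem13:
  fixes V :: "'a::linorder set" and E :: "'a set set" and u v w x :: 'a
  assumes "simple_graph V E"
    and "{u, v} \<in> E"
    and "w \<in> V - closed_nbhd_edge V E u v"
    and "\<forall>y \<in> V - closed_nbhd_edge V E u v. {w, y} \<notin> E"
    and "x \<in> nbhd V E w"
    and "degree V E x = 2"
  shows "reg TYPE('k::field) V E = reg TYPE('k) V (E - {{u, v}})"
proof -
  note sg0 = assms(1)[unfolded simple_graph_def]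
  have V: "finite V" using sg0 by blast
  have sgE: "sg E" unfolding sg_def using sg0 by blast
  have sgE': "sg (E - {{u,v}})" using sgE unfolding sg_def by blast
  have EV: "\<forall>e\<in>E. e \<subseteq> V"
  proof
    fix e assume "e \<in> E"
    then obtain p q where "p \<in> V" "q \<in> V" "e = {p, q}" using sg0 by blast
    then show "e \<subseteq> V" by simp
  qed
  have uvne: "u \<noteq> v" using sgE assms(2) unfolding sg_def by (metis doubleton_eq_iff)
  have wV: "w \<in> V" and wN: "w \<notin> closed_nbhd_edge V E u v" using assms(3) by auto
  have wuv: "w \<noteq> u" "w \<noteq> v" using wN unfolding closed_nbhd_edge_def by auto
  have nwu: "{w,u} \<notin> E" "{w,v} \<notin> E" using wN wV unfolding closed_nbhd_edge_def nbhd_def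
    by (auto simp: insert_commute)
  have wx: "{w,x} \<in> E" and xV: "x \<in> V" using assms(5) unfolding nbhd_def by auto
  have Wiso: "\<forall>y\<in>V. {w,y} \<in> E \<longrightarrow> {u,y} \<in> E \<or> {v,y} \<in> E"
  proof (intro ballI impI)
    fix y assume y: "y \<in> V" "{w,y} \<in> E"
    hence "y \<in> closed_nbhd_edge V E u v" using assms(4) by blast
    moreover have "y \<noteq> u" "y \<noteq> v" using y nwu by auto
    ultimately show "{u,y} \<in> E \<or> {v,y} \<in> E" unfolding closed_nbhd_edge_def nbhd_def by auto
  qed
  have "{u,x} \<in> E \<or> {v,x} \<in> E" using Wiso xV wx by blast
  then obtain a where a: "a = u \<or> a = v" "{x,a} \<in> E"
  proof
    assume "{u,x} \<in> E" then have "{x,u} \<in> E" by (simp add: insert_commute)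
    then show ?thesis using that by blast
  next
    assume "{v,x} \<in> E" then have "{x,v} \<in> E" by (simp add: insert_commute)
    then show ?thesis using that by blast
  qed
  have aw: "a \<noteq> w" using a wuv by blast
  have aV: "a \<in> V" using a assms(2) EV by blast
  have nx: "nbhd V E x = {a, w}"
  proof -
    have sub: "{a, w} \<subseteq> nbhd V E x" unfolding nbhd_def using a(2) wx aV wV by (auto simp: insert_commute)
    have fin: "finite (nbhd V E x)" unfolding nbhd_def using V by simp
    have "card {a, w} = 2" using aw by simp
    then show ?thesis using card_subset_eq[OF fin sub] assms(6) unfolding degree_def by simp
  qed
  have xn: "\<forall>y. {x,y} \<in> E \<longrightarrow> y = a \<or> y = w"
  proof (intro allI impI)
    fix y assume "{x,y} \<in> E"
    moreover have "y \<in> V" using EV calculation by blast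
    ultimately have "y \<in> nbhd V E x" unfolding nbhd_def by simp
    then show "y = a \<or> y = w" using nx by simp
  qed
  have xn': "\<forall>y. {x,y} \<in> E - {{u,v}} \<longrightarrow> y = a \<or> y = w" using xn by blast
  have wx': "{w,x} \<in> E - {{u,v}}" using wx wuv by (auto simp: doubleton_eq_iff)
  have H1: "\<And>S. S \<subseteq> V \<Longrightarrow> u \<notin> S \<or> v \<notin> S \<Longrightarrow> IC E S = IC (E - {{u,v}}) S"
    by (subst IC_eq) auto
  have H1': "\<And>S. S \<subseteq> V \<Longrightarrow> u \<notin> S \<or> v \<notin> S \<Longrightarrow> IC (E - {{u,v}}) S = IC E S"
    by (subst IC_eq) auto
  have CT: "\<And>S d. S \<subseteq> V \<Longrightarrow> w \<in> S \<Longrightarrow> u \<in> S \<Longrightarrow> v \<in> S \<Longrightarrow>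
      reduced_homology_nonzero TYPE('k) V (IC E S) d \<longleftrightarrow> reduced_homology_nonzero TYPE('k) V (IC (E - {{u,v}}) S) d"
    by (rule ct_graph[OF V sgE EV assms(2) uvne wuv nwu Wiso])
  have D1: "\<And>S d. S \<subseteq> V \<Longrightarrow> reduced_homology_nonzero TYPE('k) V (IC E S) d \<Longrightarrow>
      \<exists>T\<subseteq>V. reduced_homology_nonzero TYPE('k) V (IC (E - {{u,v}}) T) d"
  proof -
    fix S d assume SV: "S \<subseteq> V" and P: "reduced_homology_nonzero TYPE('k) V (IC E S) d"
    show "\<exists>T\<subseteq>V. reduced_homology_nonzero TYPE('k) V (IC (E - {{u,v}}) T) d"
    proof (rule transfer[OF V sgE H1 _ a(1) wV xV wuv nwu wx xn SV P])
      fix T assume "T \<subseteq> V" "w \<in> T" "u \<in> T" "v \<in> T" "reduced_homology_nonzero TYPE('k) V (IC E T) d"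
      then show "reduced_homology_nonzero TYPE('k) V (IC (E - {{u,v}}) T) d" using CT[of T d] by simp
    qed
  qed
  have D2: "\<And>S d. S \<subseteq> V \<Longrightarrow> reduced_homology_nonzero TYPE('k) V (IC (E - {{u,v}}) S) d \<Longrightarrow>
      \<exists>T\<subseteq>V. reduced_homology_nonzero TYPE('k) V (IC E T) d"
  proof -
    fix S d assume SV: "S \<subseteq> V" and P: "reduced_homology_nonzero TYPE('k) V (IC (E - {{u,v}}) S) d"
    have nwu': "{w,u} \<notin> E - {{u,v}}" "{w,v} \<notin> E - {{u,v}}" using nwu by auto
    show "\<exists>T\<subseteq>V. reduced_homology_nonzero TYPE('k) V (IC E T) d"
    proof (rule transfer[OF V sgE' H1' _ a(1) wV xV wuv nwu' wx' xn' SV P])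
      fix T assume "T \<subseteq> V" "w \<in> T" "u \<in> T" "v \<in> T" "reduced_homology_nonzero TYPE('k) V (IC (E - {{u,v}}) T) d"
      then show "reduced_homology_nonzero TYPE('k) V (IC E T) d" using CT[of T d] by simp
    qed
  qed
  have "{j::nat. \<exists>S\<subseteq>V. reduced_homology_nonzero TYPE('k) V (IC E S) (int j - 1)}
      = {j::nat. \<exists>S\<subseteq>V. reduced_homology_nonzero TYPE('k) V (IC (E - {{u,v}}) S) (int j - 1)}"
  proof (intro Collect_cong iffI)
    fix j assume "\<exists>S\<subseteq>V. reduced_homology_nonzero TYPE('k) V (IC E S) (int j - 1)"
    then obtain S where "S \<subseteq> V" "reduced_homology_nonzero TYPE('k) V (IC E S) (int j - 1)" by blast
    then show "\<exists>S\<subseteq>V. reduced_homology_nonzero TYPE('k) V (IC (E - {{u,v}}) S) (int j - 1)" by (rule D1)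
  next
    fix j assume "\<exists>S\<subseteq>V. reduced_homology_nonzero TYPE('k) V (IC (E - {{u,v}}) S) (int j - 1)"
    then obtain S where "S \<subseteq> V" "reduced_homology_nonzero TYPE('k) V (IC (E - {{u,v}}) S) (int j - 1)" by blast
    then show "\<exists>S\<subseteq>V. reduced_homology_nonzero TYPE('k) V (IC E S) (int j - 1)" by (rule D2)
  qed
  then show ?thesis unfolding reg_alt[OF V] by simp
qed


end
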